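(* Let $a$ be a root of a unit $u$ in a spatial product system $\mathcal E$. Then $a_t\in\mathcal E^I_t$ for every $t>0$, i.e. $a$ lies in the type I part of $\mathcal E$.
   Context: A product system is a measurable family $(\mathcal E_t)_{t>0}$ of separable Hilbert spaces with an associative multiplication $\mathcal E_s\times\mathcal E_t\to\mathcal E_{s+t}$ inducing unitaries $\mathcal E_s\otimes\mathcal E_t\cong\mathcal E_{s+t}$. A unit is a measurable section $(u_t)$ of nonzero vectors with $u_{s+t}=u_su_t$; $\mathcal E$ is spatial if it has a unit. The type I part $\mathcal E^I$ is the smallest product subsystem containing all units. An additive unit of $u$ is a measurable section $(a_t)$ with $a_{s+t}=a_su_t+u_sa_t$ for all $s,t>0$; a root of $u$ is an additive unit with $\langle a_t,u_t\rangle=0$ for all $t>0$. *)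

theory Defs
  imports "HOL-Analysis.Analysis"
begin

text \<open>The distribution has no complex inner product spaces, so an ambient complex
Hilbert space is given by an abelian group 'h together with a complex scalar
multiplication sc and an inner product ip (conjugate linear in the first,
linear in the second argument), required to be complete for the induced norm.\<close>

definition hnorm :: "('h \<Rightarrow> 'h \<Rightarrow> complex) \<Rightarrow> 'h \<Rightarrow> real" where
  "hnorm ip x = sqrt (Re (ip x x))"

definition complex_hilbert :: "('h::ab_group_add \<Rightarrow> 'h \<Rightarrow> complex) \<Rightarrow> (complex \<Rightarrow> 'h \<Rightarrow> 'h) \<Rightarrow> bool" where
  "complex_hilbert ip sc \<longleftrightarrow>
     (\<forall>a x y. sc a (x + y) = sc a x + sc a y) \<and>
     (\<forall>a b x. sc (a + b) x = sc a x + sc b x) \<and>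
     (\<forall>a b x. sc a (sc b x) = sc (a * b) x) \<and>
     (\<forall>x. sc 1 x = x) \<and>
     (\<forall>x y z. ip x (y + z) = ip x y + ip x z) \<and>
     (\<forall>a x y. ip x (sc a y) = a * ip x y) \<and>
     (\<forall>x y. ip y x = cnj (ip x y)) \<and>
     (\<forall>x. 0 \<le> Re (ip x x)) \<and>
     (\<forall>x. ip x x = 0 \<longrightarrow> x = 0) \<and>
     (\<forall>X. (\<forall>e>0. \<exists>N. \<forall>m\<ge>N. \<forall>n\<ge>N. hnorm ip (X m - X n) < e) \<longrightarrow>
          (\<exists>L. (\<lambda>n. hnorm ip (X n - L)) \<longlonglongrightarrow> 0))"

definition lin_subspace :: "(complex \<Rightarrow> 'h \<Rightarrow> 'h) \<Rightarrow> 'h::ab_group_add set \<Rightarrow> bool" where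
  "lin_subspace sc A \<longleftrightarrow> 0 \<in> A \<and> (\<forall>x\<in>A. \<forall>y\<in>A. x + y \<in> A) \<and> (\<forall>c. \<forall>x\<in>A. sc c x \<in> A)"

definition hclosed :: "('h::ab_group_add \<Rightarrow> 'h \<Rightarrow> complex) \<Rightarrow> 'h set \<Rightarrow> bool" where
  "hclosed ip A \<longleftrightarrow> (\<forall>X L. (\<forall>n. X n \<in> A) \<and> (\<lambda>n. hnorm ip (X n - L)) \<longlonglongrightarrow> 0 \<longrightarrow> L \<in> A)"

definition closed_subspace :: "('h::ab_group_add \<Rightarrow> 'h \<Rightarrow> complex) \<Rightarrow> (complex \<Rightarrow> 'h \<Rightarrow> 'h) \<Rightarrow> 'h set \<Rightarrow> bool" where
  "closed_subspace ip sc A \<longleftrightarrow> lin_subspace sc A \<and> hclosed ip A"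

definition cspan :: "('h::ab_group_add \<Rightarrow> 'h \<Rightarrow> complex) \<Rightarrow> (complex \<Rightarrow> 'h \<Rightarrow> 'h) \<Rightarrow> 'h set \<Rightarrow> 'h set" where
  "cspan ip sc S = \<Inter> {A. closed_subspace ip sc A \<and> S \<subseteq> A}"

definition hseparable :: "('h::ab_group_add \<Rightarrow> 'h \<Rightarrow> complex) \<Rightarrow> 'h set \<Rightarrow> bool" where
  "hseparable ip A \<longleftrightarrow> (\<exists>D. countable D \<and> D \<subseteq> A \<and> (\<forall>x\<in>A. \<forall>e>0. \<exists>d\<in>D. hnorm ip (x - d) < e))"

text \<open>That it induces a unitary E s \<otimes> E t \<cong> E (s+t) is spelled out as: bilinear,
multiplicative on inner products, and with total range.  The measurable
structure is given (as for measurable fields of Hilbert spaces) by the set Sec of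
measurable sections: inner products of measurable sections are measurable,
Sec is maximal with this property, Sec contains a countable fundamental family,
and the multiplication is measurable.\<close>

definition pos_sec :: "(real \<Rightarrow> 'h set) \<Rightarrow> (real \<Rightarrow> 'h) \<Rightarrow> bool" where
  "pos_sec E f \<longleftrightarrow> (\<forall>t>0. f t \<in> E t)"

definition product_system ::
  "('h::ab_group_add \<Rightarrow> 'h \<Rightarrow> complex) \<Rightarrow> (complex \<Rightarrow> 'h \<Rightarrow> 'h) \<Rightarrow>
   (real \<Rightarrow> 'h set) \<Rightarrow> (real \<Rightarrow> real \<Rightarrow> 'h \<Rightarrow> 'h \<Rightarrow> 'h) \<Rightarrow> (real \<Rightarrow> 'h) set \<Rightarrow> bool" where
  "product_system ip sc E pm Sec \<longleftrightarrow>
     complex_hilbert ip sc \<and>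
     (\<forall>t>0. closed_subspace ip sc (E t) \<and> hseparable ip (E t)) \<and>
     (\<forall>s>0. \<forall>t>0. \<forall>x\<in>E s. \<forall>y\<in>E t. pm s t x y \<in> E (s + t)) \<and>
     (\<forall>s>0. \<forall>t>0. \<forall>x\<in>E s. \<forall>x'\<in>E s. \<forall>y\<in>E t.
        pm s t (x + x') y = pm s t x y + pm s t x' y) \<and>
     (\<forall>s>0. \<forall>t>0. \<forall>x\<in>E s. \<forall>y\<in>E t. \<forall>y'\<in>E t.
        pm s t x (y + y') = pm s t x y + pm s t x y') \<and>
     (\<forall>s>0. \<forall>t>0. \<forall>c. \<forall>x\<in>E s. \<forall>y\<in>E t.
        pm s t (sc c x) y = sc c (pm s t x y) \<and> pm s t x (sc c y) = sc c (pm s t x y)) \<and>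
     (\<forall>s>0. \<forall>t>0. \<forall>x\<in>E s. \<forall>x'\<in>E s. \<forall>y\<in>E t. \<forall>y'\<in>E t.
        ip (pm s t x y) (pm s t x' y') = ip x x' * ip y y') \<and>
     (\<forall>s>0. \<forall>t>0. cspan ip sc {pm s t x y | x y. x \<in> E s \<and> y \<in> E t} = E (s + t)) \<and>
     (\<forall>r>0. \<forall>s>0. \<forall>t>0. \<forall>x\<in>E r. \<forall>y\<in>E s. \<forall>z\<in>E t.
        pm (r + s) t (pm r s x y) z = pm r (s + t) x (pm s t y z)) \<and>
     (\<forall>f\<in>Sec. pos_sec E f) \<and>
     (\<forall>f\<in>Sec. \<forall>g\<in>Sec. (\<lambda>t. ip (f t) (g t)) \<in> borel_measurable (restrict_space lborel {0<..})) \<and>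
     (\<forall>f. pos_sec E f \<and> (\<forall>g\<in>Sec. (\<lambda>t. ip (g t) (f t)) \<in> borel_measurable (restrict_space lborel {0<..}))
          \<longrightarrow> f \<in> Sec) \<and>
     (\<exists>D. countable D \<and> D \<subseteq> Sec \<and> (\<forall>t>0. cspan ip sc ((\<lambda>g. g t) ` D) = E t)) \<and>
     (\<forall>f\<in>Sec. \<forall>g\<in>Sec. \<forall>h\<in>Sec.
        (\<lambda>(s, t). ip (pm s t (f s) (g t)) (h (s + t)))
          \<in> borel_measurable (restrict_space (lborel \<Otimes>\<^sub>M lborel) ({0<..} \<times> {0<..})))"

definition is_unit :: "(real \<Rightarrow> 'h set) \<Rightarrow> (real \<Rightarrow> real \<Rightarrow> 'h \<Rightarrow> 'h \<Rightarrow> 'h) \<Rightarrow> (real \<Rightarrow> 'h) set \<Rightarrow>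
    (real \<Rightarrow> 'h::ab_group_add) \<Rightarrow> bool" where
  "is_unit E pm Sec u \<longleftrightarrow> u \<in> Sec \<and> (\<forall>t>0. u t \<noteq> 0) \<and>
     (\<forall>s>0. \<forall>t>0. u (s + t) = pm s t (u s) (u t))"

definition spatial :: "(real \<Rightarrow> 'h::ab_group_add set) \<Rightarrow> (real \<Rightarrow> real \<Rightarrow> 'h \<Rightarrow> 'h \<Rightarrow> 'h) \<Rightarrow> (real \<Rightarrow> 'h) set \<Rightarrow> bool" where
  "spatial E pm Sec \<longleftrightarrow> (\<exists>u::real \<Rightarrow> 'h. is_unit E pm Sec u)"

definition additive_unit :: "(real \<Rightarrow> real \<Rightarrow> 'h \<Rightarrow> 'h \<Rightarrow> 'h) \<Rightarrow> (real \<Rightarrow> 'h) set \<Rightarrow>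
    (real \<Rightarrow> 'h::ab_group_add) \<Rightarrow> (real \<Rightarrow> 'h) \<Rightarrow> bool" where
  "additive_unit pm Sec u a \<longleftrightarrow> a \<in> Sec \<and>
     (\<forall>s>0. \<forall>t>0. a (s + t) = pm s t (a s) (u t) + pm s t (u s) (a t))"

definition is_root :: "('h \<Rightarrow> 'h \<Rightarrow> complex) \<Rightarrow> (real \<Rightarrow> real \<Rightarrow> 'h \<Rightarrow> 'h \<Rightarrow> 'h) \<Rightarrow> (real \<Rightarrow> 'h) set \<Rightarrow>
    (real \<Rightarrow> 'h::ab_group_add) \<Rightarrow> (real \<Rightarrow> 'h) \<Rightarrow> bool" where
  "is_root ip pm Sec u a \<longleftrightarrow> additive_unit pm Sec u a \<and> (\<forall>t>0. ip (a t) (u t) = 0)"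

text \<open>Product subsystems (families of closed subspaces F t \<subseteq> E t which are
themselves product systems under the restricted multiplication, i.e.
F (s+t) is the closed span of F s F t) and the type I part: the smallest
product subsystem containing all units, i.e. the intersection of all of them.\<close>

definition product_subsystem :: "('h::ab_group_add \<Rightarrow> 'h \<Rightarrow> complex) \<Rightarrow> (complex \<Rightarrow> 'h \<Rightarrow> 'h) \<Rightarrow>
    (real \<Rightarrow> 'h set) \<Rightarrow> (real \<Rightarrow> real \<Rightarrow> 'h \<Rightarrow> 'h \<Rightarrow> 'h) \<Rightarrow> (real \<Rightarrow> 'h set) \<Rightarrow> bool" where
  "product_subsystem ip sc E pm F \<longleftrightarrow>
     (\<forall>t>0. closed_subspace ip sc (F t) \<and> F t \<subseteq> E t) \<and>
     (\<forall>s>0. \<forall>t>0. cspan ip sc {pm s t x y | x y. x \<in> F s \<and> y \<in> F t} = F (s + t))"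

definition type_I_part :: "('h::ab_group_add \<Rightarrow> 'h \<Rightarrow> complex) \<Rightarrow> (complex \<Rightarrow> 'h \<Rightarrow> 'h) \<Rightarrow>
    (real \<Rightarrow> 'h set) \<Rightarrow> (real \<Rightarrow> real \<Rightarrow> 'h \<Rightarrow> 'h \<Rightarrow> 'h) \<Rightarrow> (real \<Rightarrow> 'h) set \<Rightarrow> real \<Rightarrow> 'h set" where
  "type_I_part ip sc E pm Sec t =
     \<Inter> {F t | F. product_subsystem ip sc E pm F \<and>
                  (\<forall>v. is_unit E pm Sec v \<longrightarrow> (\<forall>s>0. v s \<in> F s))}"

end

theory Submission
  imports Defs "HOL-Analysis.Analysis"
begin



locale hil =
  fixes ip :: "'h::ab_group_add \<Rightarrow> 'h \<Rightarrow> complex" and sc :: "complex \<Rightarrow> 'h \<Rightarrow> 'h"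
  assumes H: "complex_hilbert ip sc"
begin

lemma sc_add_right: "sc a (x + y) = sc a x + sc a y" using H unfolding complex_hilbert_def by metis
lemma sc_add_left: "sc (a + b) x = sc a x + sc b x" using H unfolding complex_hilbert_def by metis
lemma sc_sc: "sc a (sc b x) = sc (a * b) x" using H unfolding complex_hilbert_def by metis
lemma sc_one: "sc 1 x = x" using H unfolding complex_hilbert_def by metis
lemma ip_add_right: "ip x (y + z) = ip x y + ip x z" using H unfolding complex_hilbert_def by metis
lemma ip_sc_right: "ip x (sc a y) = a * ip x y" using H unfolding complex_hilbert_def by metis
lemma ip_cnj: "ip y x = cnj (ip x y)" using H unfolding complex_hilbert_def by metis
lemma ip_pos: "0 \<le> Re (ip x x)" using H unfolding complex_hilbert_def by metis
lemma ip_zero_imp: "ip x x = 0 \<Longrightarrow> x = 0" using H unfolding complex_hilbert_def by metis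
lemma complete: "(\<forall>e>0. \<exists>N. \<forall>m\<ge>N. \<forall>n\<ge>N. hnorm ip (X m - X n) < e) \<Longrightarrow>
          (\<exists>L. (\<lambda>n. hnorm ip (X n - L)) \<longlonglongrightarrow> 0)" using H unfolding complex_hilbert_def by metis

lemma sc_zero: "sc 0 x = 0"
proof -
  have "sc 0 x = sc 0 x + sc 0 x" using sc_add_left[of 0 0 x] by simp
  then show ?thesis by simp
qed

lemma sc_minus_one: "sc (-1) x = - x"
proof -
  have "sc 1 x + sc (-1) x = 0" using sc_add_left[of 1 "-1" x] by (simp add: sc_zero)
  then show ?thesis by (simp add: sc_one eq_neg_iff_add_eq_0 add.commute)
qed

lemma sc_minus: "sc a (- x) = - sc a x"
proof -
  have "sc a x + sc a (- x) = 0" using sc_add_right[of a x "-x"]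
    by (metis add.right_inverse mult_zero_right sc_sc sc_zero)
  then show ?thesis by (simp add: eq_neg_iff_add_eq_0 add.commute)
qed

lemma sc_diff_right: "sc a (x - y) = sc a x - sc a y"
  using sc_add_right[of a x "-y"] by (simp add: sc_minus)

lemma sc_zero_right: "sc a 0 = 0"
  by (metis mult_zero_right sc_sc sc_zero)

lemma ip_zero_right: "ip x 0 = 0"
proof -
  have "ip x 0 = ip x 0 + ip x 0" using ip_add_right[of x 0 0] by simp
  then show ?thesis by simp
qed

lemma ip_zero_left: "ip 0 x = 0" by (metis complex_cnj_zero ip_cnj ip_zero_right)

lemma ip_minus_right: "ip x (- y) = - ip x y"
proof -
  have "ip x y + ip x (-y) = 0" using ip_add_right[of x y "-y"] by (simp add: ip_zero_right)
  then show ?thesis by (simp add: eq_neg_iff_add_eq_0 add.commute)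
qed

lemma ip_diff_right: "ip x (y - z) = ip x y - ip x z"
  using ip_add_right[of x y "-z"] by (simp add: ip_minus_right)

lemma ip_add_left: "ip (x + y) z = ip x z + ip y z"
  by (metis complex_cnj_add ip_add_right ip_cnj)

lemma ip_diff_left: "ip (x - y) z = ip x z - ip y z"
  by (metis complex_cnj_diff ip_cnj ip_diff_right)

lemma ip_minus_left: "ip (- x) z = - ip x z"
  by (metis complex_cnj_minus ip_cnj ip_minus_right)

lemma ip_sc_left: "ip (sc a x) y = cnj a * ip x y"
  by (metis complex_cnj_cnj complex_cnj_mult ip_cnj ip_sc_right)

lemma ip_self_real: "ip x x = complex_of_real (Re (ip x x))"
proof -
  have "ip x x = cnj (ip x x)" using ip_cnj[of x x] .
  then have "Im (ip x x) = 0" by (metis Reals_cnj_iff complex_is_Real_iff)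
  then show ?thesis by (simp add: complex_eq_iff)
qed

lemma hnorm_sq: "(hnorm ip x)^2 = Re (ip x x)"
  unfolding hnorm_def by (simp add: ip_pos)

lemma hnorm_nonneg: "0 \<le> hnorm ip x" unfolding hnorm_def by (simp add: ip_pos)

lemma hnorm_zero_iff: "hnorm ip x = 0 \<longleftrightarrow> x = 0"
proof
  assume "hnorm ip x = 0"
  then have "Re (ip x x) = 0" using hnorm_sq[of x] by simp
  then have "ip x x = 0" using ip_self_real[of x] by simp
  then show "x = 0" by (rule ip_zero_imp)
qed (simp add: hnorm_def ip_zero_right)

lemma hnorm_zero[simp]: "hnorm ip 0 = 0" using hnorm_zero_iff by simp


lemma Re_ip_sum: "Re (ip (x + y) (x + y)) = Re (ip x x) + Re (ip y y) + 2 * Re (ip x y)"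
proof -
  have "ip (x+y) (x+y) = ip x x + ip y y + ip x y + ip y x"
    unfolding ip_add_left ip_add_right by simp
  moreover have "Re (ip y x) = Re (ip x y)" by (subst ip_cnj) simp
  ultimately show ?thesis by simp
qed

lemma cauchy_schwarz: "cmod (ip x y) \<le> hnorm ip x * hnorm ip y"
proof (cases "y = 0")
  case True then show ?thesis by (simp add: ip_zero_right)
next
  case False
  define B where "B = Re (ip y y)"
  have Bpos: "B > 0"
  proof -
    have "B \<noteq> 0" using False ip_self_real[of y] ip_zero_imp[of y] B_def by force
    then show ?thesis using ip_pos[of y] B_def by simp
  qed
  define c where "c = ip y x / complex_of_real B"
  have "0 \<le> Re (ip (x - sc c y) (x - sc c y))" by (rule ip_pos)
  also have "ip (x - sc c y) (x - sc c y) = ip x x - c * ip x y - cnj c * ip y x + cnj c * c * ip y y"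
    by (simp add: ip_diff_left ip_diff_right ip_sc_left ip_sc_right algebra_simps)
  also have "ip y y = complex_of_real B" using ip_self_real B_def by simp
  also have "ip y x = cnj (ip x y)" by (rule ip_cnj)
  finally have "0 \<le> Re (ip x x - c * ip x y - cnj c * cnj (ip x y) + cnj c * c * complex_of_real B)" .
  moreover have "c = cnj (ip x y) / complex_of_real B" unfolding c_def by (subst ip_cnj) simp
  ultimately have "0 \<le> Re (ip x x - cnj (ip x y) * ip x y / B - ip x y * cnj (ip x y) / B + ip x y * cnj (ip x y) / B)"
    using Bpos by (simp add: field_simps)
  also have "\<dots> = Re (ip x x) - (cmod (ip x y))^2 / B"
    using cmod_power2[of "ip x y"] by (simp add: power2_eq_square)
  finally have "0 \<le> Re (ip x x) - (cmod (ip x y))^2 / B" .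
  then have "(cmod (ip x y))^2 \<le> Re (ip x x) * B" using Bpos by (simp add: field_simps)
  also have "\<dots> = (hnorm ip x * hnorm ip y)^2" by (simp add: hnorm_sq power_mult_distrib B_def)
  finally show ?thesis
    using hnorm_nonneg power2_le_imp_le mult_nonneg_nonneg by metis
qed

lemma hnorm_triangle: "hnorm ip (x + y) \<le> hnorm ip x + hnorm ip y"
proof -
  have "Re (ip x y) \<le> hnorm ip x * hnorm ip y"
    using cauchy_schwarz[of x y] complex_Re_le_cmod order_trans by blast
  then have "(hnorm ip (x+y))^2 \<le> (hnorm ip x + hnorm ip y)^2"
    by (simp add: hnorm_sq Re_ip_sum power2_sum)
  then show ?thesis using hnorm_nonneg
    by (meson add_nonneg_nonneg power2_le_imp_le)
qed

lemma hnorm_minus: "hnorm ip (- x) = hnorm ip x"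
  unfolding hnorm_def by (simp add: ip_minus_left ip_minus_right)

lemma hnorm_commute: "hnorm ip (x - y) = hnorm ip (y - x)"
  by (metis hnorm_minus minus_diff_eq)

lemma hnorm_triangle_diff: "hnorm ip (x - z) \<le> hnorm ip (x - y) + hnorm ip (y - z)"
  using hnorm_triangle[of "x - y" "y - z"] by simp

lemma hnorm_sc: "hnorm ip (sc c x) = cmod c * hnorm ip x"
proof -
  have "ip (sc c x) (sc c x) = cnj c * c * ip x x" by (simp add: ip_sc_left ip_sc_right mult.assoc)
  also have "\<dots> = complex_of_real ((cmod c)^2 * Re (ip x x))"
    using complex_norm_square[of c] ip_self_real[of x] by (metis mult.commute of_real_mult)
  finally have "Re (ip (sc c x) (sc c x)) = (cmod c)^2 * Re (ip x x)" by simp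
  then show ?thesis unfolding hnorm_def by (simp add: real_sqrt_mult)
qed

lemma ip_cont_right:
  assumes "(\<lambda>n. hnorm ip (X n - L)) \<longlonglongrightarrow> 0"
  shows "(\<lambda>n. ip g (X n)) \<longlonglongrightarrow> ip g L"
proof -
  have "(\<lambda>n. hnorm ip g * hnorm ip (X n - L)) \<longlonglongrightarrow> hnorm ip g * 0"
    by (intro tendsto_intros assms)
  note lim = this
  have bnd: "norm (ip g (X n) - ip g L) \<le> hnorm ip g * hnorm ip (X n - L)" for n
  proof -
    have "ip g (X n) - ip g L = ip g (X n - L)" by (simp add: ip_diff_right)
    then show ?thesis using cauchy_schwarz[of g "X n - L"] by simp
  qed
  have "(\<lambda>n. ip g (X n) - ip g L) \<longlonglongrightarrow> 0"
    by (rule Lim_null_comparison[OF always_eventually[OF allI[OF bnd]]]) (use lim in simp)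
  then show ?thesis by (simp add: LIM_zero_iff)
qed

lemma lim_unique:
  assumes "(\<lambda>n. hnorm ip (X n - L)) \<longlonglongrightarrow> 0" "(\<lambda>n. hnorm ip (X n - L')) \<longlonglongrightarrow> 0"
  shows "L = L'"
proof -
  have "\<And>n. hnorm ip (L - L') \<le> hnorm ip (X n - L) + hnorm ip (X n - L')"
    using hnorm_triangle_diff[of L L' "X n" for n] hnorm_commute by metis
  then have "hnorm ip (L - L') \<le> 0 + 0"
    using tendsto_add[OF assms] by (intro LIMSEQ_le_const[of _ "0+0"]) auto
  then show ?thesis using hnorm_nonneg[of "L - L'"] hnorm_zero_iff by simp
qed

lemma lin_diff: "lin_subspace sc A \<Longrightarrow> x \<in> A \<Longrightarrow> y \<in> A \<Longrightarrow> x - y \<in> A"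
  unfolding lin_subspace_def by (metis diff_conv_add_uminus sc_minus_one)

end



fun XL :: "(real \<Rightarrow> real \<Rightarrow> 'h \<Rightarrow> 'h \<Rightarrow> 'h) \<Rightarrow> (real \<Rightarrow> 'h) \<Rightarrow> real list \<Rightarrow> 'h::zero" where
  "XL pm v [] = 0"
| "XL pm v [d] = v d"
| "XL pm v (d # e # ds) = pm d (sum_list (e # ds)) (v d) (XL pm v (e # ds))"

inductive refines :: "real list \<Rightarrow> real list \<Rightarrow> bool" where
  ref_nil: "refines [] []"
| ref_cons: "refines R P \<Longrightarrow> g \<noteq> [] \<Longrightarrow> refines (g @ R) (sum_list g # P)"

lemma refines_sum: "refines R P \<Longrightarrow> sum_list R = sum_list P"
  by (induction rule: refines.induct) auto

lemma refines_Nil_iff: "refines R [] \<longleftrightarrow> R = []"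
  using refines.cases ref_nil by blast

lemma refines_ne: "refines R P \<Longrightarrow> P \<noteq> [] \<Longrightarrow> R \<noteq> []"
  by (induction rule: refines.induct) auto

lemma refines_consE:
  assumes "refines R (p # P)"
  obtains g R' where "R = g @ R'" "g \<noteq> []" "sum_list g = p" "refines R' P"
  using assms by (cases rule: refines.cases) auto

lemma sum_list_pos: "g \<noteq> [] \<Longrightarrow> \<forall>x\<in>set g. x > (0::real) \<Longrightarrow> sum_list g > 0"
proof (induction g)
  case (Cons a g) then show ?case by (cases "g = []") (auto intro: add_pos_pos)
qed simp

lemma refines_pos: "refines R P \<Longrightarrow> \<forall>x\<in>set R. x > 0 \<Longrightarrow> \<forall>x\<in>set P. x > 0"
proof (induction rule: refines.induct)
  case (ref_cons R P g)
  then have "sum_list g > 0"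
    by (intro sum_list_pos) auto
  then show ?case using ref_cons by auto
qed simp

lemma refines_single: "g \<noteq> [] \<Longrightarrow> refines g [sum_list g]"
  using ref_cons[OF ref_nil, of g] by simp

lemma refines_cons_same: "refines R P \<Longrightarrow> refines (p # R) (p # P)"
  using ref_cons[of R P "[p]"] by simp

lemma common_refinement_aux:
  "\<forall>P Q. length P + length Q = n \<longrightarrow> (\<forall>x\<in>set P. x > 0) \<longrightarrow> (\<forall>x\<in>set Q. x > 0) \<longrightarrow>
     P \<noteq> [] \<longrightarrow> Q \<noteq> [] \<longrightarrow> sum_list P = sum_list Q \<longrightarrow>
     (\<exists>R. (\<forall>x\<in>set R. x > 0) \<and> refines R P \<and> refines R Q)"
proof (induction n rule: less_induct)
  case (less n)
  show ?case
  proof (intro allI impI)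
    fix P Q :: "real list"
    assume len: "length P + length Q = n" and pP: "\<forall>x\<in>set P. x > 0" and pQ: "\<forall>x\<in>set Q. x > 0"
      and neP: "P \<noteq> []" and neQ: "Q \<noteq> []" and sm: "sum_list P = sum_list Q"
    obtain p P' where P: "P = p # P'" using neP by (cases P) auto
    obtain q Q' where Q: "Q = q # Q'" using neQ by (cases Q) auto
    have ne_iff: "xs = [] \<longleftrightarrow> sum_list xs = 0" if "\<forall>x\<in>set xs. x > (0::real)" for xs
      using sum_list_pos[of xs] that by force
    have pP': "\<forall>x\<in>set P'. x > 0" and pQ': "\<forall>x\<in>set Q'. x > 0" and pp: "p > 0" and qq: "q > 0"
      using pP pQ P Q by auto
    have sP': "sum_list P' \<ge> 0" using pP' by (intro sum_list_nonneg) auto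
    have sQ': "sum_list Q' \<ge> 0" using pQ' by (intro sum_list_nonneg) auto
    consider "p = q" | "p < q" | "q < p" by linarith
    then show "\<exists>R. (\<forall>x\<in>set R. x > 0) \<and> refines R P \<and> refines R Q"
    proof cases
      case 1
      show ?thesis
      proof (cases "P' = []")
        case True
        then have "Q' = []" using sm P Q 1 ne_iff[OF pQ'] by simp
        then show ?thesis using True P Q 1 pp refines_single[of "[p]"] by (intro exI[of _ "[p]"]) auto
      next
        case False
        then have "Q' \<noteq> []" using sm P Q 1 ne_iff[OF pQ'] ne_iff[OF pP'] by simp
        moreover have "length P' + length Q' < n" using len P Q by simp
        ultimately obtain R' where "\<forall>x\<in>set R'. x > 0" "refines R' P'" "refines R' Q'"
          using less[rule_format, of "length P' + length Q'" P' Q'] False pP' pQ' sm P Q 1 by auto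
        then show ?thesis using P Q 1 pp refines_cons_same by (intro exI[of _ "p # R'"]) auto
      qed
    next
      case 2
      have "P' \<noteq> []" using sm P Q 2 sQ' by auto
      moreover have "length P' + length ((q - p) # Q') < n" using len P Q by simp
      moreover have "sum_list P' = sum_list ((q - p) # Q')" using sm P Q by simp
      moreover have "\<forall>x\<in>set ((q - p) # Q'). x > 0" using pQ' 2 by auto
      ultimately obtain R' where R': "\<forall>x\<in>set R'. x > 0" "refines R' P'" "refines R' ((q - p) # Q')"
        using less[rule_format, of "length P' + length ((q - p) # Q')" P' "(q - p) # Q'"] pP' by blast
      obtain g R'' where g: "R' = g @ R''" "g \<noteq> []" "sum_list g = q - p" "refines R'' Q'"
        using R'(3) by (rule refines_consE)
      have "refines ((p # g) @ R'') (sum_list (p # g) # Q')" using ref_cons[OF g(4), of "p # g"] by simp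
      then have "refines (p # R') Q" using g Q by simp
      then show ?thesis using R' P pp refines_cons_same by (intro exI[of _ "p # R'"]) auto
    next
      case 3
      have "Q' \<noteq> []" using sm P Q 3 sP' by auto
      moreover have "length ((p - q) # P') + length Q' < n" using len P Q by simp
      moreover have "sum_list ((p - q) # P') = sum_list Q'" using sm P Q by simp
      moreover have "\<forall>x\<in>set ((p - q) # P'). x > 0" using pP' 3 by auto
      ultimately obtain R' where R': "\<forall>x\<in>set R'. x > 0" "refines R' ((p - q) # P')" "refines R' Q'"
        using less[rule_format, of "length ((p - q) # P') + length Q'" "(p - q) # P'" Q'] pQ' by blast
      obtain g R'' where g: "R' = g @ R''" "g \<noteq> []" "sum_list g = p - q" "refines R'' P'"
        using R'(2) by (rule refines_consE)
      have "refines ((q # g) @ R'') (sum_list (q # g) # P')" using ref_cons[OF g(4), of "q # g"] by simp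
      then have "refines (q # R') P" using g P by simp
      then show ?thesis using R' Q qq refines_cons_same by (intro exI[of _ "q # R'"]) auto
    qed
  qed
qed

lemma common_refinement:
  assumes "\<forall>x\<in>set P. x > (0::real)" "\<forall>x\<in>set Q. x > 0" "P \<noteq> []" "Q \<noteq> []" "sum_list P = sum_list Q"
  obtains R where "\<forall>x\<in>set R. x > 0" "refines R P" "refines R Q"
  using common_refinement_aux assms by blast




locale psys =
  fixes ip :: "'h::ab_group_add \<Rightarrow> 'h \<Rightarrow> complex" and sc :: "complex \<Rightarrow> 'h \<Rightarrow> 'h"
    and E :: "real \<Rightarrow> 'h set" and pm :: "real \<Rightarrow> real \<Rightarrow> 'h \<Rightarrow> 'h \<Rightarrow> 'h"
    and Sec :: "(real \<Rightarrow> 'h) set" and u b :: "real \<Rightarrow> 'h"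
  assumes PS: "product_system ip sc E pm Sec"
    and U: "is_unit E pm Sec u"
    and RT: "is_root ip pm Sec u b"

sublocale psys \<subseteq> hil ip sc
  by unfold_locales (rule PS[unfolded product_system_def, THEN conjunct1])

context psys begin

lemma E_sub: "t > 0 \<Longrightarrow> closed_subspace ip sc (E t)"
  using PS[unfolded product_system_def, THEN conjunct2, THEN conjunct1] unfolding Ball_def by blast
lemma E_lin: "t > 0 \<Longrightarrow> lin_subspace sc (E t)"
  using E_sub[of t] unfolding closed_subspace_def by blast
lemma E_closed: "t > 0 \<Longrightarrow> hclosed ip (E t)"
  using E_sub[of t] unfolding closed_subspace_def by blast
lemma E_add: "t > 0 \<Longrightarrow> x \<in> E t \<Longrightarrow> y \<in> E t \<Longrightarrow> x + y \<in> E t"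
  using E_lin[of t] unfolding lin_subspace_def by blast
lemma E_sc: "t > 0 \<Longrightarrow> x \<in> E t \<Longrightarrow> sc c x \<in> E t"
  using E_lin[of t] unfolding lin_subspace_def by blast
lemma E_diff: "t > 0 \<Longrightarrow> x \<in> E t \<Longrightarrow> y \<in> E t \<Longrightarrow> x - y \<in> E t"
  using E_lin[of t] lin_diff by blast
lemma E_zero: "t > 0 \<Longrightarrow> 0 \<in> E t"
  using E_lin[of t] unfolding lin_subspace_def by blast

lemma pm_in: "s > 0 \<Longrightarrow> t > 0 \<Longrightarrow> x \<in> E s \<Longrightarrow> y \<in> E t \<Longrightarrow> pm s t x y \<in> E (s + t)"
  using PS[unfolded product_system_def, THEN conjunct2, THEN conjunct2, THEN conjunct1] unfolding Ball_def by blast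
lemma pm_add_left: "s > 0 \<Longrightarrow> t > 0 \<Longrightarrow> x \<in> E s \<Longrightarrow> x' \<in> E s \<Longrightarrow> y \<in> E t \<Longrightarrow>
    pm s t (x + x') y = pm s t x y + pm s t x' y"
  using PS[unfolded product_system_def, THEN conjunct2, THEN conjunct2, THEN conjunct2, THEN conjunct1] unfolding Ball_def by blast
lemma pm_add_right: "s > 0 \<Longrightarrow> t > 0 \<Longrightarrow> x \<in> E s \<Longrightarrow> y \<in> E t \<Longrightarrow> y' \<in> E t \<Longrightarrow>
    pm s t x (y + y') = pm s t x y + pm s t x y'"
  using PS[unfolded product_system_def, THEN conjunct2, THEN conjunct2, THEN conjunct2, THEN conjunct2, THEN conjunct1] unfolding Ball_def by blast
lemma pm_sc_left: "s > 0 \<Longrightarrow> t > 0 \<Longrightarrow> x \<in> E s \<Longrightarrow> y \<in> E t \<Longrightarrow> pm s t (sc c x) y = sc c (pm s t x y)"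
  using PS[unfolded product_system_def, THEN conjunct2, THEN conjunct2, THEN conjunct2, THEN conjunct2, THEN conjunct2, THEN conjunct1] unfolding Ball_def by blast
lemma pm_sc_right: "s > 0 \<Longrightarrow> t > 0 \<Longrightarrow> x \<in> E s \<Longrightarrow> y \<in> E t \<Longrightarrow> pm s t x (sc c y) = sc c (pm s t x y)"
  using PS[unfolded product_system_def, THEN conjunct2, THEN conjunct2, THEN conjunct2, THEN conjunct2, THEN conjunct2, THEN conjunct1] unfolding Ball_def by blast
lemma pm_ip: "s > 0 \<Longrightarrow> t > 0 \<Longrightarrow> x \<in> E s \<Longrightarrow> x' \<in> E s \<Longrightarrow> y \<in> E t \<Longrightarrow> y' \<in> E t \<Longrightarrow>
    ip (pm s t x y) (pm s t x' y') = ip x x' * ip y y'"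
  using PS[unfolded product_system_def, THEN conjunct2, THEN conjunct2, THEN conjunct2, THEN conjunct2, THEN conjunct2, THEN conjunct2, THEN conjunct1] unfolding Ball_def by blast
lemma pm_assoc: "r > 0 \<Longrightarrow> s > 0 \<Longrightarrow> t > 0 \<Longrightarrow> x \<in> E r \<Longrightarrow> y \<in> E s \<Longrightarrow> z \<in> E t \<Longrightarrow>
    pm (r + s) t (pm r s x y) z = pm r (s + t) x (pm s t y z)"
  using PS[unfolded product_system_def, THEN conjunct2, THEN conjunct2, THEN conjunct2, THEN conjunct2, THEN conjunct2, THEN conjunct2, THEN conjunct2, THEN conjunct2, THEN conjunct1] unfolding Ball_def by blast
lemma Sec_pos: "f \<in> Sec \<Longrightarrow> t > 0 \<Longrightarrow> f t \<in> E t"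
  using PS[unfolded product_system_def, THEN conjunct2, THEN conjunct2, THEN conjunct2, THEN conjunct2, THEN conjunct2, THEN conjunct2, THEN conjunct2, THEN conjunct2, THEN conjunct2, THEN conjunct1] unfolding pos_sec_def by blast
lemma Sec_meas: "f \<in> Sec \<Longrightarrow> g \<in> Sec \<Longrightarrow> (\<lambda>t. ip (f t) (g t)) \<in> borel_measurable (restrict_space lborel {0<..})"
  using PS[unfolded product_system_def, THEN conjunct2, THEN conjunct2, THEN conjunct2, THEN conjunct2, THEN conjunct2, THEN conjunct2, THEN conjunct2, THEN conjunct2, THEN conjunct2, THEN conjunct2, THEN conjunct1] unfolding Ball_def by blast
lemma Sec_max: "(\<And>t. t > 0 \<Longrightarrow> f t \<in> E t) \<Longrightarrow>
   (\<And>g. g \<in> Sec \<Longrightarrow> (\<lambda>t. ip (g t) (f t)) \<in> borel_measurable (restrict_space lborel {0<..})) \<Longrightarrow> f \<in> Sec"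
  using PS[unfolded product_system_def, THEN conjunct2, THEN conjunct2, THEN conjunct2, THEN conjunct2, THEN conjunct2, THEN conjunct2, THEN conjunct2, THEN conjunct2, THEN conjunct2, THEN conjunct2, THEN conjunct2, THEN conjunct1] unfolding pos_sec_def by blast
lemma Sec_prod: "f \<in> Sec \<Longrightarrow> g \<in> Sec \<Longrightarrow> h \<in> Sec \<Longrightarrow>
   (\<lambda>(s, t). ip (pm s t (f s) (g t)) (h (s + t)))
          \<in> borel_measurable (restrict_space (lborel \<Otimes>\<^sub>M lborel) ({0<..} \<times> {0<..}))"
  using PS[unfolded product_system_def, THEN conjunct2, THEN conjunct2, THEN conjunct2, THEN conjunct2, THEN conjunct2, THEN conjunct2, THEN conjunct2, THEN conjunct2, THEN conjunct2, THEN conjunct2, THEN conjunct2, THEN conjunct2, THEN conjunct2] unfolding Ball_def by blast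

lemma pm_diff_left: "s > 0 \<Longrightarrow> t > 0 \<Longrightarrow> x \<in> E s \<Longrightarrow> x' \<in> E s \<Longrightarrow> y \<in> E t \<Longrightarrow>
    pm s t (x - x') y = pm s t x y - pm s t x' y"
  using pm_add_left[of s t "x - x'" x' y] E_diff by simp
lemma pm_diff_right: "s > 0 \<Longrightarrow> t > 0 \<Longrightarrow> x \<in> E s \<Longrightarrow> y \<in> E t \<Longrightarrow> y' \<in> E t \<Longrightarrow>
    pm s t x (y - y') = pm s t x y - pm s t x y'"
  using pm_add_right[of s t x "y - y'" y'] E_diff by simp

lemma hnorm_pm: "s > 0 \<Longrightarrow> t > 0 \<Longrightarrow> x \<in> E s \<Longrightarrow> y \<in> E t \<Longrightarrow>
    hnorm ip (pm s t x y) = hnorm ip x * hnorm ip y"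
proof -
  assume a: "s > 0" "t > 0" "x \<in> E s" "y \<in> E t"
  have "ip (pm s t x y) (pm s t x y) = ip x x * ip y y" using pm_ip a by blast
  also have "\<dots> = complex_of_real (Re (ip x x) * Re (ip y y))"
    using ip_self_real[of x] ip_self_real[of y] by (metis of_real_mult)
  finally show ?thesis unfolding hnorm_def by (simp add: real_sqrt_mult)
qed

lemma u_Sec: "u \<in> Sec" and u_ne: "t > 0 \<Longrightarrow> u t \<noteq> 0"
  and u_mult: "s > 0 \<Longrightarrow> t > 0 \<Longrightarrow> u (s + t) = pm s t (u s) (u t)"
  using U unfolding is_unit_def by auto
lemma b_Sec: "b \<in> Sec" and b_add: "s > 0 \<Longrightarrow> t > 0 \<Longrightarrow> b (s + t) = pm s t (b s) (u t) + pm s t (u s) (b t)"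
  and b_ort: "t > 0 \<Longrightarrow> ip (b t) (u t) = 0"
  using RT unfolding is_root_def additive_unit_def by auto
lemma u_E: "t > 0 \<Longrightarrow> u t \<in> E t" using u_Sec Sec_pos by blast
lemma b_E: "t > 0 \<Longrightarrow> b t \<in> E t" using b_Sec Sec_pos by blast
lemma b_ort': "t > 0 \<Longrightarrow> ip (u t) (b t) = 0"
  by (subst ip_cnj) (simp add: b_ort)

definition v :: "real \<Rightarrow> 'h" where "v t = u t + b t"
definition phi :: "real \<Rightarrow> real" where "phi t = Re (ip (u t) (u t))"
definition alpha :: "real \<Rightarrow> real" where "alpha t = Re (ip (b t) (b t))"
definition psi :: "real \<Rightarrow> real" where "psi t = alpha t / phi t"

lemma v_E: "t > 0 \<Longrightarrow> v t \<in> E t" unfolding v_def using u_E b_E E_add by blast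

lemma phi_pos: "t > 0 \<Longrightarrow> phi t > 0"
proof -
  assume t: "t > 0"
  have "phi t \<noteq> 0" using u_ne[OF t] ip_self_real[of "u t"] ip_zero_imp[of "u t"] phi_def by force
  then show ?thesis using ip_pos[of "u t"] phi_def by simp
qed
lemma alpha_nonneg: "alpha t \<ge> 0" unfolding alpha_def by (rule ip_pos)
lemma psi_nonneg: "t > 0 \<Longrightarrow> psi t \<ge> 0" unfolding psi_def using phi_pos[of t] alpha_nonneg[of t] by simp

lemma ip_uu: "ip (u t) (u t) = complex_of_real (phi t)" unfolding phi_def by (rule ip_self_real)
lemma ip_bb: "t > 0 \<Longrightarrow> ip (b t) (b t) = complex_of_real (phi t * psi t)"
proof -
  assume t: "t > 0"
  have "phi t * psi t = alpha t" unfolding psi_def using phi_pos[OF t] by simp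
  then show ?thesis unfolding alpha_def by (metis ip_self_real)
qed

lemma phi_mult: "s > 0 \<Longrightarrow> t > 0 \<Longrightarrow> phi (s + t) = phi s * phi t"
proof -
  assume st: "s > 0" "t > 0"
  have "ip (u (s+t)) (u (s+t)) = ip (u s) (u s) * ip (u t) (u t)" using st by (simp add: u_mult pm_ip u_E)
  then show ?thesis unfolding ip_uu by (metis Re_complex_of_real of_real_mult)
qed

lemma alpha_add: "s > 0 \<Longrightarrow> t > 0 \<Longrightarrow> alpha (s + t) = alpha s * phi t + phi s * alpha t"
proof -
  assume st: "s > 0" "t > 0"
  have "ip (b (s+t)) (b (s+t)) = ip (b s) (b s) * ip (u t) (u t) + ip (u s) (u s) * ip (b t) (b t)"
    using st by (simp add: b_add ip_add_left ip_add_right pm_ip u_E b_E b_ort b_ort')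
  then show ?thesis unfolding alpha_def phi_def
    using ip_self_real[of "b s"] ip_self_real[of "b t"] ip_self_real[of "u s"] ip_self_real[of "u t"]
    by (metis Re_complex_of_real of_real_add of_real_mult)
qed

lemma psi_add: "s > 0 \<Longrightarrow> t > 0 \<Longrightarrow> psi (s + t) = psi s + psi t"
  unfolding psi_def using phi_pos[of s] phi_pos[of t]
  by (simp add: alpha_add phi_mult field_simps)

lemma ip_uv: "t > 0 \<Longrightarrow> ip (u t) (v t) = complex_of_real (phi t)"
  unfolding v_def by (simp add: ip_add_right b_ort' ip_uu)
lemma ip_bv: "t > 0 \<Longrightarrow> ip (b t) (v t) = complex_of_real (phi t * psi t)"
  unfolding v_def by (simp add: ip_add_right b_ort ip_bb)
lemma ip_vv: "t > 0 \<Longrightarrow> ip (v t) (v t) = complex_of_real (phi t * (1 + psi t))"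
proof -
  assume t: "t > 0"
  have "ip (v t) (v t) = ip (u t) (v t) + ip (b t) (v t)" unfolding v_def[of t] by (rule ip_add_left)
  then show ?thesis using ip_uv[OF t] ip_bv[OF t] by (simp add: algebra_simps)
qed

end



lemma prod_ge_one: "\<forall>x\<in>set xs. x \<ge> (0::real) \<Longrightarrow> prod_list (map (\<lambda>x. 1 + x) xs) \<ge> 1"
proof (induction xs)
  case (Cons a xs)
  then have "1 * 1 \<le> (1 + a) * prod_list (map (\<lambda>x. 1 + x) xs)" by (intro mult_mono) auto
  then show ?case by simp
qed simp

lemma prod_le_exp: "\<forall>x\<in>set xs. x \<ge> (0::real) \<Longrightarrow> prod_list (map (\<lambda>x. 1 + x) xs) \<le> exp (sum_list xs)"
proof (induction xs)
  case (Cons a xs)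
  then have "prod_list (map (\<lambda>x. 1 + x) (a # xs)) \<le> exp a * exp (sum_list xs)"
    using exp_ge_add_one_self[of a]
    using prod_ge_one[of xs] by (simp, intro mult_mono) auto
  then show ?case by (simp add: exp_add)
qed simp

lemma prod_ge_exp: "\<forall>x\<in>set xs. 0 \<le> x \<and> x \<le> e \<Longrightarrow> e \<le> (1::real) \<Longrightarrow>
   exp ((1 - e) * sum_list xs) \<le> prod_list (map (\<lambda>x. 1 + x) xs)"
proof (induction xs)
  case (Cons a xs)
  have a: "0 \<le> a" "a \<le> e" using Cons by auto
  have "exp ((1 - e) * a) \<le> 1 + a"
  proof -
    have "a * a \<le> a * e" using a by (intro mult_left_mono) auto
    then have "(1 - e) * a \<le> a - a^2" by (simp add: power2_eq_square algebra_simps)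
    also have "\<dots> \<le> ln (1 + a)" using a Cons.prems(2) by (intro ln_one_plus_pos_lower_bound) auto
    finally show ?thesis using a by (metis exp_le_cancel_iff exp_ln add_pos_nonneg zero_less_one)
  qed
  moreover have "exp ((1 - e) * sum_list xs) \<le> prod_list (map (\<lambda>x. 1 + x) xs)" using Cons by auto
  ultimately have "exp ((1 - e) * a) * exp ((1 - e) * sum_list xs) \<le> (1 + a) * prod_list (map (\<lambda>x. 1 + x) xs)"
    using a by (intro mult_mono) auto
  then show ?case by (simp add: exp_add[symmetric] algebra_simps)
qed simp

context psys begin

abbreviation X where "X \<equiv> XL pm v"
definition pos :: "real list \<Rightarrow> bool" where "pos ds \<longleftrightarrow> (\<forall>d\<in>set ds. d > 0)"
definition prodpsi :: "real list \<Rightarrow> real" where "prodpsi ds = prod_list (map (\<lambda>d. 1 + psi d) ds)"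

lemma pos_Cons[simp]: "pos (d # ds) \<longleftrightarrow> d > 0 \<and> pos ds" unfolding pos_def by simp
lemma pos_append[simp]: "pos (ds @ es) \<longleftrightarrow> pos ds \<and> pos es" unfolding pos_def by auto
lemma pos_sum: "ds \<noteq> [] \<Longrightarrow> pos ds \<Longrightarrow> sum_list ds > 0" unfolding pos_def by (rule sum_list_pos)

lemma X_cons: "ds \<noteq> [] \<Longrightarrow> X (d # ds) = pm d (sum_list ds) (v d) (X ds)"
  by (cases ds) auto

lemma X_E: "ds \<noteq> [] \<Longrightarrow> pos ds \<Longrightarrow> X ds \<in> E (sum_list ds)"
proof (induction ds)
  case (Cons d ds)
  show ?case
  proof (cases "ds = []")
    case True then show ?thesis using Cons v_E by simp
  next
    case False
    then show ?thesis using Cons pos_sum[of ds] by (simp add: X_cons pm_in v_E)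
  qed
qed simp

lemma X_app: "ds \<noteq> [] \<Longrightarrow> es \<noteq> [] \<Longrightarrow> pos ds \<Longrightarrow> pos es \<Longrightarrow>
    X (ds @ es) = pm (sum_list ds) (sum_list es) (X ds) (X es)"
proof (induction ds)
  case (Cons d ds)
  show ?case
  proof (cases "ds = []")
    case True then show ?thesis using Cons by (simp add: X_cons)
  next
    case False
    have d: "d > 0" and pds: "pos ds" and pes: "pos es" using Cons by auto
    have "X ((d # ds) @ es) = pm d (sum_list ds + sum_list es) (v d) (X (ds @ es))"
      using False X_cons[of "ds @ es" d] by simp
    also have "\<dots> = pm d (sum_list ds + sum_list es) (v d) (pm (sum_list ds) (sum_list es) (X ds) (X es))"
      using Cons False by simp
    also have "\<dots> = pm (d + sum_list ds) (sum_list es) (pm d (sum_list ds) (v d) (X ds)) (X es)"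
      using pm_assoc[OF d pos_sum[OF False pds] pos_sum[OF Cons(3) pes] v_E[OF d] X_E[OF False pds] X_E[OF Cons(3) pes]]
      by simp
    finally show ?thesis using X_cons[OF False] by simp
  qed
qed simp

lemma psi_sum: "ds \<noteq> [] \<Longrightarrow> pos ds \<Longrightarrow> psi (sum_list ds) = sum_list (map psi ds)"
proof (induction ds)
  case (Cons d ds)
  then show ?case by (cases "ds = []") (auto simp: psi_add pos_sum)
qed simp

lemma IP1: "ds \<noteq> [] \<Longrightarrow> pos ds \<Longrightarrow> ip (u (sum_list ds)) (X ds) = complex_of_real (phi (sum_list ds))"
proof (induction ds)
  case (Cons d ds)
  show ?case
  proof (cases "ds = []")
    case True then show ?thesis using Cons ip_uv by simp
  next
    case False
    have d: "d > 0" and pds: "pos ds" using Cons by auto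
    have S: "sum_list ds > 0" using pos_sum[OF False pds] .
    have "ip (u (sum_list (d # ds))) (X (d # ds)) = ip (u d) (v d) * ip (u (sum_list ds)) (X ds)"
      using d S False pds by (simp add: u_mult X_cons pm_ip u_E v_E X_E)
    then show ?thesis using Cons False d S by (simp add: ip_uv phi_mult)
  qed
qed simp

lemma IP2: "ds \<noteq> [] \<Longrightarrow> pos ds \<Longrightarrow> ip (b (sum_list ds)) (X ds) = complex_of_real (phi (sum_list ds) * psi (sum_list ds))"
proof (induction ds)
  case (Cons d ds)
  show ?case
  proof (cases "ds = []")
    case True then show ?thesis using Cons ip_bv by simp
  next
    case False
    have d: "d > 0" and pds: "pos ds" using Cons by auto
    have S: "sum_list ds > 0" using pos_sum[OF False pds] .
    have "ip (b (sum_list (d # ds))) (X (d # ds)) =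
        ip (b d) (v d) * ip (u (sum_list ds)) (X ds) + ip (u d) (v d) * ip (b (sum_list ds)) (X ds)"
      using d S False pds by (simp add: b_add X_cons pm_ip u_E v_E X_E b_E ip_add_left)
    then show ?thesis using Cons False d S
      by (simp add: ip_uv ip_bv IP1 phi_mult psi_add algebra_simps)
  qed
qed simp

lemma IPv: "ds \<noteq> [] \<Longrightarrow> pos ds \<Longrightarrow> ip (v (sum_list ds)) (X ds) = complex_of_real (phi (sum_list ds) * (1 + psi (sum_list ds)))"
  unfolding v_def[of "sum_list ds"] by (simp add: ip_add_left IP1 IP2 algebra_simps)

lemma IP3: "ds \<noteq> [] \<Longrightarrow> pos ds \<Longrightarrow> ip (X ds) (X ds) = complex_of_real (phi (sum_list ds) * prodpsi ds)"
proof (induction ds)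
  case (Cons d ds)
  show ?case
  proof (cases "ds = []")
    case True then show ?thesis using Cons ip_vv by (simp add: prodpsi_def)
  next
    case False
    have d: "d > 0" and pds: "pos ds" using Cons by auto
    have S: "sum_list ds > 0" using pos_sum[OF False pds] .
    have "ip (X (d # ds)) (X (d # ds)) = ip (v d) (v d) * ip (X ds) (X ds)"
      using d S False pds by (simp add: X_cons pm_ip v_E X_E)
    then show ?thesis using Cons False d S
      by (simp add: ip_vv phi_mult prodpsi_def algebra_simps)
  qed
qed simp

lemma IPref: "refines Q P \<Longrightarrow> pos Q \<Longrightarrow> P \<noteq> [] \<Longrightarrow>
   ip (X P) (X Q) = complex_of_real (phi (sum_list P) * prodpsi P)"
proof (induction rule: refines.induct)
  case (ref_cons R P g)
  have pg: "pos g" and pR: "pos R" using ref_cons by auto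
  have sg: "sum_list g > 0" using pos_sum[OF ref_cons(2) pg] .
  show ?case
  proof (cases "P = []")
    case True
    then have "R = []" using ref_cons(1) refines_Nil_iff by blast
    then show ?thesis using True IPv[OF ref_cons(2) pg] by (simp add: prodpsi_def)
  next
    case False
    have Rne: "R \<noteq> []" using refines_ne[OF ref_cons(1) False] .
    have pP: "pos P" using refines_pos[OF ref_cons(1)] pR unfolding pos_def by blast
    have sR: "sum_list R = sum_list P" using refines_sum[OF ref_cons(1)] .
    have sP: "sum_list P > 0" using pos_sum[OF False pP] .
    have "ip (X (sum_list g # P)) (X (g @ R)) =
          ip (v (sum_list g)) (X g) * ip (X P) (X R)"
      using X_cons[OF False] X_app[OF ref_cons(2) Rne pg pR] sR sg sP
      by (simp add: pm_ip v_E X_E[OF ref_cons(2) pg] X_E[OF False pP] X_E[OF Rne pR, unfolded sR])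
    then show ?thesis using ref_cons(3)[OF pR False] IPv[OF ref_cons(2) pg] sg sP
      by (simp add: phi_mult prodpsi_def algebra_simps)
  qed
qed simp

lemma norm_ref: "refines Q P \<Longrightarrow> pos Q \<Longrightarrow> P \<noteq> [] \<Longrightarrow>
   (hnorm ip (X P - X Q))^2 = phi (sum_list P) * (prodpsi Q - prodpsi P)"
proof -
  assume r: "refines Q P" and pQ: "pos Q" and ne: "P \<noteq> []"
  have Qne: "Q \<noteq> []" using refines_ne[OF r ne] .
  have pP: "pos P" using refines_pos[OF r] pQ unfolding pos_def by blast
  have sQ: "sum_list Q = sum_list P" using refines_sum[OF r] .
  have 1: "ip (X P) (X Q) = complex_of_real (phi (sum_list P) * prodpsi P)" using IPref[OF r pQ ne] .
  have 2: "ip (X Q) (X P) = complex_of_real (phi (sum_list P) * prodpsi P)" using 1 by (subst ip_cnj) simp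
  have "ip (X P - X Q) (X P - X Q) = ip (X P) (X P) - ip (X P) (X Q) - (ip (X Q) (X P) - ip (X Q) (X Q))"
    by (simp add: ip_diff_left ip_diff_right)
  also have "\<dots> = complex_of_real (phi (sum_list P) * (prodpsi Q - prodpsi P))"
    unfolding 1 2 IP3[OF ne pP] IP3[OF Qne pQ] sQ by (simp add: algebra_simps)
  finally show ?thesis by (simp add: hnorm_sq)
qed

definition bnd :: "real \<Rightarrow> real \<Rightarrow> real" where
  "bnd T e = sqrt (phi T * exp (psi T) * e * psi T)"

lemma ref_bound:
  assumes r: "refines Q P" and pQ: "pos Q" and ne: "P \<noteq> []"
    and small: "\<forall>p\<in>set P. psi p \<le> e" and e1: "e \<le> 1"
  shows "hnorm ip (X P - X Q) \<le> bnd (sum_list P) e"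
proof -
  have Qne: "Q \<noteq> []" using refines_ne[OF r ne] .
  have pP: "pos P" using refines_pos[OF r] pQ unfolding pos_def by blast
  have sQ: "sum_list Q = sum_list P" using refines_sum[OF r] .
  define T where "T = sum_list P"
  have T: "T > 0" using pos_sum[OF ne pP] T_def by simp
  have e0: "e \<ge> 0" using small ne pP psi_nonneg unfolding pos_def
    by (metis list.set_sel(1) order.trans)
  have nnQ: "\<forall>x\<in>set (map psi Q). x \<ge> 0" using pQ psi_nonneg unfolding pos_def by auto
  have nnP: "\<forall>x\<in>set (map psi P). 0 \<le> x \<and> x \<le> e" using pP psi_nonneg small unfolding pos_def by auto
  have "prodpsi Q \<le> exp (psi T)"
    using prod_le_exp[OF nnQ] psi_sum[OF Qne pQ] sQ T_def by (simp add: prodpsi_def comp_def)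
  moreover have "exp ((1 - e) * psi T) \<le> prodpsi P"
    using prod_ge_exp[OF nnP e1] psi_sum[OF ne pP] T_def by (simp add: prodpsi_def comp_def)
  ultimately have "prodpsi Q - prodpsi P \<le> exp (psi T) - exp ((1 - e) * psi T)" by simp
  also have "\<dots> = exp (psi T) * (1 - exp (- (e * psi T)))"
    by (simp add: algebra_simps exp_diff exp_minus field_simps)
  also have "\<dots> \<le> exp (psi T) * (e * psi T)"
    using exp_ge_add_one_self[of "- (e * psi T)"] by (intro mult_left_mono) auto
  finally have "phi T * (prodpsi Q - prodpsi P) \<le> phi T * (exp (psi T) * (e * psi T))"
    using phi_pos[OF T] by (intro mult_left_mono) auto
  then have "(hnorm ip (X P - X Q))^2 \<le> phi T * exp (psi T) * e * psi T"
    using norm_ref[OF r pQ ne] T_def by (simp add: algebra_simps)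
  then show ?thesis unfolding bnd_def T_def
    by (simp add: real_le_rsqrt hnorm_nonneg)
qed

end



lemma inv_Suc_lim: "(\<lambda>n. c / real (Suc n)) \<longlonglongrightarrow> (0::real)"
proof -
  have "(\<lambda>n. c * inverse (real (Suc n))) \<longlonglongrightarrow> c * 0"
    by (intro tendsto_intros LIMSEQ_inverse_real_of_nat)
  then show ?thesis by (simp add: divide_inverse)
qed

context psys begin

definition eqp :: "nat \<Rightarrow> real \<Rightarrow> real list" where
  "eqp n t = replicate (Suc n) (t / real (Suc n))"
definition Y :: "nat \<Rightarrow> real \<Rightarrow> 'h" where "Y n t = X (eqp n t)"

lemma eqp_ne: "eqp n t \<noteq> []" unfolding eqp_def by simp
lemma eqp_pos: "t > 0 \<Longrightarrow> pos (eqp n t)" unfolding eqp_def pos_def by simp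
lemma eqp_sum: "sum_list (eqp n t) = t"
proof -
  have h: "real (Suc n) * (t / real (Suc n)) = t" by (simp del: of_nat_Suc)
  show ?thesis unfolding eqp_def sum_list_replicate h ..
qed
lemma eqp_psi: "t > 0 \<Longrightarrow> p \<in> set (eqp n t) \<Longrightarrow> psi p = psi t / real (Suc n)"
proof -
  assume t: "t > 0" and p: "p \<in> set (eqp n t)"
  have "psi t = sum_list (map psi (eqp n t))" using psi_sum[OF eqp_ne eqp_pos[OF t]] eqp_sum by simp
  also have "\<dots> = real (Suc n) * psi (t / real (Suc n))" unfolding eqp_def map_replicate sum_list_replicate ..
  finally show ?thesis using p unfolding eqp_def by (auto simp del: of_nat_Suc)
qed

lemma Y_E: "t > 0 \<Longrightarrow> Y n t \<in> E t"
  unfolding Y_def using X_E[OF eqp_ne eqp_pos] eqp_sum by metis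


lemma two_bound:
  assumes P: "pos P" "P \<noteq> []" and Q: "pos Q" "Q \<noteq> []" and sm: "sum_list P = sum_list Q"
    and e1: "\<forall>p\<in>set P. psi p \<le> e1" "e1 \<le> 1" and e2: "\<forall>p\<in>set Q. psi p \<le> e2" "e2 \<le> 1"
  shows "hnorm ip (X P - X Q) \<le> bnd (sum_list P) e1 + bnd (sum_list P) e2"
proof -
  obtain R where R: "\<forall>x\<in>set R. x > 0" "refines R P" "refines R Q"
    using common_refinement[of P Q] P Q sm unfolding pos_def by blast
  have pR: "pos R" using R(1) unfolding pos_def .
  have "hnorm ip (X P - X Q) \<le> hnorm ip (X P - X R) + hnorm ip (X R - X Q)" by (rule hnorm_triangle_diff)
  also have "\<dots> \<le> bnd (sum_list P) e1 + bnd (sum_list Q) e2"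
    using ref_bound[OF R(2) pR P(2) e1] ref_bound[OF R(3) pR Q(2) e2] hnorm_commute[of "X R" "X Q"]
    by simp
  finally show ?thesis using sm by simp
qed

lemma bnd_lim: "(\<lambda>n. bnd T (c / real (Suc n))) \<longlonglongrightarrow> 0"
proof -
  have "(\<lambda>n. sqrt (phi T * exp (psi T) * (c / real (Suc n)) * psi T)) \<longlonglongrightarrow> sqrt (phi T * exp (psi T) * 0 * psi T)"
    by (intro tendsto_intros inv_Suc_lim)
  then show ?thesis unfolding bnd_def by simp
qed

lemma ev_small: "eventually (\<lambda>n. c / real (Suc n) \<le> 1) sequentially"
proof -
  have "eventually (\<lambda>n. c / real (Suc n) < 1) sequentially"
    using inv_Suc_lim[of c] by (rule order_tendstoD(2)) simp
  then show ?thesis by (rule eventually_mono) simp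
qed

lemma Y_cauchy: "t > 0 \<Longrightarrow> \<forall>e>0. \<exists>N. \<forall>m\<ge>N. \<forall>n\<ge>N. hnorm ip (Y m t - Y n t) < e"
proof (intro allI impI)
  fix e :: real assume t: "t > 0" and e: "e > 0"
  have "eventually (\<lambda>n. bnd t (psi t / real (Suc n)) < e / 2) sequentially"
    using bnd_lim[of t "psi t"] e by (intro order_tendstoD(2)) auto
  then have "eventually (\<lambda>n. bnd t (psi t / real (Suc n)) < e / 2 \<and> psi t / real (Suc n) \<le> 1) sequentially"
    using ev_small by (rule eventually_conj)
  then obtain N where N: "\<And>n. n \<ge> N \<Longrightarrow> bnd t (psi t / real (Suc n)) < e / 2 \<and> psi t / real (Suc n) \<le> 1"
    unfolding eventually_sequentially by blast
  show "\<exists>N. \<forall>m\<ge>N. \<forall>n\<ge>N. hnorm ip (Y m t - Y n t) < e"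
  proof (intro exI allI impI)
    fix m n assume "m \<ge> N" "n \<ge> N"
    then have "hnorm ip (Y m t - Y n t) \<le> bnd t (psi t / real (Suc m)) + bnd t (psi t / real (Suc n))"
      using two_bound[OF eqp_pos[OF t] eqp_ne eqp_pos[OF t] eqp_ne, of m n] N eqp_psi[OF t] eqp_sum
      unfolding Y_def by simp
    also have "\<dots> < e" using N[OF \<open>m \<ge> N\<close>] N[OF \<open>n \<ge> N\<close>] by linarith
    finally show "hnorm ip (Y m t - Y n t) < e" .
  qed
qed

definition w :: "real \<Rightarrow> 'h" where
  "w t = (SOME L. (\<lambda>n. hnorm ip (Y n t - L)) \<longlonglongrightarrow> 0)"

lemma w_conv: "t > 0 \<Longrightarrow> (\<lambda>n. hnorm ip (Y n t - w t)) \<longlonglongrightarrow> 0"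
  unfolding w_def using complete[OF Y_cauchy] by (rule someI_ex)

lemma w_conv': "t > 0 \<Longrightarrow> (\<lambda>n. hnorm ip (w t - Y n t)) \<longlonglongrightarrow> 0"
  using w_conv hnorm_commute by simp

lemma w_approx:
  assumes t: "t > 0" and P: "pos P" "P \<noteq> []" "sum_list P = t" and e: "\<forall>p\<in>set P. psi p \<le> e" "e \<le> 1"
  shows "hnorm ip (X P - w t) \<le> bnd t e"
proof -
  have ev: "eventually (\<lambda>n. hnorm ip (X P - w t) \<le> bnd t e + bnd t (psi t / real (Suc n)) + hnorm ip (Y n t - w t)) sequentially"
    using ev_small[of "psi t"]
  proof (rule eventually_mono)
    fix n assume n: "psi t / real (Suc n) \<le> 1"
    have e2: "\<forall>p\<in>set (eqp n t). psi p \<le> psi t / real (Suc n)" using eqp_psi[OF t] by simp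
    have 1: "hnorm ip (X P - w t) \<le> hnorm ip (X P - Y n t) + hnorm ip (Y n t - w t)" by (rule hnorm_triangle_diff)
    have "hnorm ip (X P - X (eqp n t)) \<le> bnd (sum_list P) e + bnd (sum_list P) (psi t / real (Suc n))"
      by (rule two_bound[OF P(1,2) eqp_pos[OF t] eqp_ne _ e e2 n]) (simp add: P(3) eqp_sum)
    then have 2: "hnorm ip (X P - Y n t) \<le> bnd t e + bnd t (psi t / real (Suc n))"
      unfolding Y_def P(3) .
    from 1 2 show "hnorm ip (X P - w t) \<le> bnd t e + bnd t (psi t / real (Suc n)) + hnorm ip (Y n t - w t)"
      by linarith
  qed
  have lim: "(\<lambda>n. bnd t e + bnd t (psi t / real (Suc n)) + hnorm ip (Y n t - w t)) \<longlonglongrightarrow> bnd t e + 0 + 0"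
    by (intro tendsto_intros bnd_lim w_conv t)
  have "hnorm ip (X P - w t) \<le> bnd t e + 0 + 0"
    by (rule tendsto_le[OF trivial_limit_sequentially lim tendsto_const ev])
  then show ?thesis by simp
qed

lemma hclosedD: "hclosed ip A \<Longrightarrow> (\<And>n. Z n \<in> A) \<Longrightarrow> (\<lambda>n. hnorm ip (Z n - L)) \<longlonglongrightarrow> 0 \<Longrightarrow> L \<in> A"
  unfolding hclosed_def by blast

lemma w_E: "t > 0 \<Longrightarrow> w t \<in> E t"
  by (rule hclosedD[OF E_closed Y_E w_conv])

lemma v_Y: "t > 0 \<Longrightarrow> hnorm ip (v t - Y n t) \<le> sqrt (phi t * (exp (psi t) - 1 - psi t))"
proof -
  assume t: "t > 0"
  have r: "refines (eqp n t) [t]" using refines_single[OF eqp_ne, of n t] eqp_sum by simp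
  have "(hnorm ip (X [t] - X (eqp n t)))^2 = phi t * (prodpsi (eqp n t) - prodpsi [t])"
    using norm_ref[OF r eqp_pos[OF t]] by simp
  also have "\<dots> \<le> phi t * (exp (psi t) - 1 - psi t)"
  proof -
    have nn: "\<forall>x\<in>set (map psi (eqp n t)). x \<ge> 0" using psi_nonneg eqp_pos[OF t] unfolding pos_def by auto
    have "prodpsi (eqp n t) \<le> exp (psi t)"
      using prod_le_exp[OF nn] psi_sum[OF eqp_ne eqp_pos[OF t]] eqp_sum by (simp add: prodpsi_def comp_def)
    then show ?thesis using phi_pos[OF t] by (simp add: prodpsi_def)
  qed
  finally show ?thesis unfolding Y_def by (simp add: real_le_rsqrt)
qed

lemma w_v: "t > 0 \<Longrightarrow> hnorm ip (w t - v t) \<le> sqrt (phi t * (exp (psi t) - 1 - psi t))"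
proof -
  assume t: "t > 0"
  have "\<And>n. hnorm ip (w t - v t) \<le> hnorm ip (w t - Y n t) + sqrt (phi t * (exp (psi t) - 1 - psi t))"
    using hnorm_triangle_diff[of "w t" "v t" "Y n t" for n] v_Y[OF t] hnorm_commute[of "Y n t" "v t" for n]
    by (smt (verit))
  moreover have "(\<lambda>n. hnorm ip (w t - Y n t) + sqrt (phi t * (exp (psi t) - 1 - psi t))) \<longlonglongrightarrow> 0 + sqrt (phi t * (exp (psi t) - 1 - psi t))"
    by (intro tendsto_intros w_conv' t)
  ultimately show ?thesis
    by (intro tendsto_le[OF trivial_limit_sequentially, of "\<lambda>n. hnorm ip (w t - Y n t) + sqrt (phi t * (exp (psi t) - 1 - psi t))"]) auto
qed

lemma w_ne: "t > 0 \<Longrightarrow> w t \<noteq> 0"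
proof
  assume t: "t > 0" and w0: "w t = 0"
  have "\<And>n. sqrt (phi t) \<le> hnorm ip (Y n t)"
  proof -
    fix n
    have nn: "\<forall>x\<in>set (map psi (eqp n t)). x \<ge> 0" using psi_nonneg eqp_pos[OF t] unfolding pos_def by auto
    have "prodpsi (eqp n t) \<ge> 1" using prod_ge_one[OF nn] by (simp add: prodpsi_def comp_def)
    then have "phi t \<le> phi t * prodpsi (eqp n t)" using phi_pos[OF t] by simp
    also have "\<dots> = (hnorm ip (Y n t))^2" unfolding Y_def hnorm_sq
      using IP3[OF eqp_ne eqp_pos[OF t]] eqp_sum by simp
    finally show "sqrt (phi t) \<le> hnorm ip (Y n t)" by (simp add: real_sqrt_le_iff' hnorm_nonneg real_le_lsqrt)
  qed
  moreover have "(\<lambda>n. hnorm ip (Y n t)) \<longlonglongrightarrow> 0" using w_conv[OF t] w0 by simp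
  ultimately have "sqrt (phi t) \<le> 0"
    by (intro tendsto_le[OF trivial_limit_sequentially, of "\<lambda>n. hnorm ip (Y n t)"]) auto
  then show False using phi_pos[OF t] by simp
qed

end



context psys begin

lemma w_mult: assumes s: "s > 0" and t: "t > 0" shows "w (s + t) = pm s t (w s) (w t)"
proof -
  define e where "e n = max (psi s) (psi t) / real (Suc n)" for n
  have ev: "eventually (\<lambda>n. hnorm ip (pm s t (w s) (w t) - w (s + t)) \<le>
      hnorm ip (w s - Y n s) * hnorm ip (w t) + (hnorm ip (Y n s - w s) + hnorm ip (w s)) * hnorm ip (w t - Y n t)
      + bnd (s + t) (e n)) sequentially"
    using ev_small[of "max (psi s) (psi t)"]
  proof (rule eventually_mono)
    fix n assume n: "max (psi s) (psi t) / real (Suc n) \<le> 1"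
    have st: "s + t > 0" using s t by simp
    have ws: "w s \<in> E s" and wt: "w t \<in> E t" and Ys: "Y n s \<in> E s" and Yt: "Y n t \<in> E t"
      using w_E Y_E s t by auto
    have XP: "X (eqp n s @ eqp n t) = pm s t (Y n s) (Y n t)"
      using X_app[OF eqp_ne eqp_ne eqp_pos[OF s] eqp_pos[OF t]] unfolding Y_def eqp_sum .
    have small: "\<forall>p\<in>set (eqp n s @ eqp n t). psi p \<le> e n"
    proof
      fix p assume "p \<in> set (eqp n s @ eqp n t)"
      then have "psi p = psi s / real (Suc n) \<or> psi p = psi t / real (Suc n)"
        using eqp_psi[OF s] eqp_psi[OF t] by auto
      then show "psi p \<le> e n" unfolding e_def
        by (metis divide_right_mono max.cobounded1 max.cobounded2 of_nat_0_le_iff)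
    qed
    have 1: "hnorm ip (X (eqp n s @ eqp n t) - w (s + t)) \<le> bnd (s + t) (e n)"
      by (rule w_approx[OF st]) (use eqp_pos[OF s] eqp_pos[OF t] eqp_ne eqp_sum small n e_def in auto)
    have A: "pm s t (w s) (w t) - pm s t (Y n s) (Y n t) = pm s t (w s - Y n s) (w t) + pm s t (Y n s) (w t - Y n t)"
      using pm_diff_left[OF s t ws Ys wt] pm_diff_right[OF s t Ys wt Yt] by simp
    have "hnorm ip (pm s t (w s) (w t) - pm s t (Y n s) (Y n t)) \<le>
        hnorm ip (pm s t (w s - Y n s) (w t)) + hnorm ip (pm s t (Y n s) (w t - Y n t))"
      unfolding A by (rule hnorm_triangle)
    also have "\<dots> = hnorm ip (w s - Y n s) * hnorm ip (w t) + hnorm ip (Y n s) * hnorm ip (w t - Y n t)"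
      using hnorm_pm[OF s t E_diff[OF s ws Ys] wt] hnorm_pm[OF s t Ys E_diff[OF t wt Yt]] by simp
    also have "\<dots> \<le> hnorm ip (w s - Y n s) * hnorm ip (w t) + (hnorm ip (Y n s - w s) + hnorm ip (w s)) * hnorm ip (w t - Y n t)"
    proof -
      have "hnorm ip (Y n s) \<le> hnorm ip (Y n s - w s) + hnorm ip (w s)"
        using hnorm_triangle[of "Y n s - w s" "w s"] by simp
      then show ?thesis by (simp add: mult_right_mono hnorm_nonneg)
    qed
    finally have 2: "hnorm ip (pm s t (w s) (w t) - pm s t (Y n s) (Y n t)) \<le>
        hnorm ip (w s - Y n s) * hnorm ip (w t) + (hnorm ip (Y n s - w s) + hnorm ip (w s)) * hnorm ip (w t - Y n t)" .
    have 3: "hnorm ip (pm s t (w s) (w t) - w (s + t)) \<le>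
        hnorm ip (pm s t (w s) (w t) - pm s t (Y n s) (Y n t)) + hnorm ip (pm s t (Y n s) (Y n t) - w (s + t))"
      by (rule hnorm_triangle_diff)
    show "hnorm ip (pm s t (w s) (w t) - w (s + t)) \<le>
      hnorm ip (w s - Y n s) * hnorm ip (w t) + (hnorm ip (Y n s - w s) + hnorm ip (w s)) * hnorm ip (w t - Y n t)
      + bnd (s + t) (e n)"
      using 1 2 3 XP by simp
  qed
  have lim: "(\<lambda>n. hnorm ip (w s - Y n s) * hnorm ip (w t) + (hnorm ip (Y n s - w s) + hnorm ip (w s)) * hnorm ip (w t - Y n t)
      + bnd (s + t) (e n)) \<longlonglongrightarrow> 0 * hnorm ip (w t) + (0 + hnorm ip (w s)) * 0 + 0"
    unfolding e_def by (intro tendsto_intros w_conv w_conv' bnd_lim s t)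
  have "hnorm ip (pm s t (w s) (w t) - w (s + t)) \<le> 0 * hnorm ip (w t) + (0 + hnorm ip (w s)) * 0 + 0"
    by (rule tendsto_le[OF trivial_limit_sequentially lim tendsto_const ev])
  then have "hnorm ip (pm s t (w s) (w t) - w (s + t)) = 0" using hnorm_nonneg by (simp add: order_antisym)
  then show ?thesis using hnorm_zero_iff by simp
qed

lemma v_Sec: "v \<in> Sec"
proof (rule Sec_max)
  show "\<And>t. t > 0 \<Longrightarrow> v t \<in> E t" by (rule v_E)
  fix g assume g: "g \<in> Sec"
  have "(\<lambda>t. ip (g t) (u t) + ip (g t) (b t)) \<in> borel_measurable (restrict_space lborel {0<..})"
    using Sec_meas[OF g u_Sec] Sec_meas[OF g b_Sec] by (rule borel_measurable_add)
  then show "(\<lambda>t. ip (g t) (v t)) \<in> borel_measurable (restrict_space lborel {0<..})"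
    unfolding v_def by (simp add: ip_add_right)
qed

lemma Y0: "Y 0 = v"
  by (rule ext) (simp add: Y_def eqp_def)

lemma Y_Suc: "Y (Suc n) t = pm (t / real (Suc (Suc n))) (real (Suc n) * (t / real (Suc (Suc n))))
    (v (t / real (Suc (Suc n)))) (Y n (real (Suc n) * (t / real (Suc (Suc n)))))"
proof -
  define d where "d = t / real (Suc (Suc n))"
  have e1: "eqp (Suc n) t = d # replicate (Suc n) d" unfolding eqp_def d_def by simp
  have e2: "eqp n (real (Suc n) * d) = replicate (Suc n) d" unfolding eqp_def
    by (simp del: of_nat_Suc)
  have "Y (Suc n) t = pm d (sum_list (replicate (Suc n) d)) (v d) (X (replicate (Suc n) d))"
    unfolding Y_def e1 by (rule X_cons) simp
  also have "\<dots> = pm d (real (Suc n) * d) (v d) (Y n (real (Suc n) * d))"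
    unfolding Y_def e2 sum_list_replicate ..
  finally show ?thesis unfolding d_def .
qed

lemma Y_Sec: "Y n \<in> Sec"
proof (induction n)
  case 0 then show ?case using v_Sec Y0 by simp
next
  case (Suc n)
  show ?case
  proof (rule Sec_max)
    show "\<And>t. t > 0 \<Longrightarrow> Y (Suc n) t \<in> E t" by (rule Y_E)
    fix h assume h: "h \<in> Sec"
    define F where "F = (\<lambda>(s, r). ip (pm s r (v s) (Y n r)) (h (s + r)))"
    define g where "g = (\<lambda>t::real. (t / real (Suc (Suc n)), real (Suc n) * (t / real (Suc (Suc n)))))"
    have F: "F \<in> borel_measurable (restrict_space (lborel \<Otimes>\<^sub>M lborel) ({0<..} \<times> {0<..}))"
      unfolding F_def by (rule Sec_prod[OF v_Sec Suc h])
    have g1: "g \<in> lborel \<rightarrow>\<^sub>M lborel \<Otimes>\<^sub>M lborel"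
      unfolding g_def by (intro measurable_Pair) (simp_all add: measurable_lborel2)
    have g2: "g \<in> {0<..} \<rightarrow> {0<..} \<times> {0<..}" unfolding g_def by (auto simp del: of_nat_Suc)
    have g: "g \<in> restrict_space lborel {0<..} \<rightarrow>\<^sub>M restrict_space (lborel \<Otimes>\<^sub>M lborel) ({0<..} \<times> {0<..})"
      by (rule measurable_restrict_space3[OF g1 g2])
    have "(\<lambda>t. F (g t)) \<in> borel_measurable (restrict_space lborel {0<..})"
      by (rule measurable_compose[OF g F])
    then have m: "(\<lambda>t. cnj (F (g t))) \<in> borel_measurable (restrict_space lborel {0<..})"
      by (rule borel_measurable_continuous_on[OF linear_continuous_on[OF bounded_linear_cnj]])
    have eq: "ip (h t) (Y (Suc n) t) = cnj (F (g t))" for t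
    proof -
      have "t / real (Suc (Suc n)) + real (Suc n) * (t / real (Suc (Suc n))) = t"
        by (simp add: field_simps del: of_nat_Suc) (simp add: algebra_simps)
      then show ?thesis unfolding F_def g_def Y_Suc[of n t] by (subst ip_cnj) simp
    qed
    show "(\<lambda>t. ip (h t) (Y (Suc n) t)) \<in> borel_measurable (restrict_space lborel {0<..})"
      unfolding eq using m .
  qed
qed

lemma w_Sec: "w \<in> Sec"
proof (rule Sec_max)
  show "\<And>t. t > 0 \<Longrightarrow> w t \<in> E t" by (rule w_E)
  fix h assume h: "h \<in> Sec"
  show "(\<lambda>t. ip (h t) (w t)) \<in> borel_measurable (restrict_space lborel {0<..})"
  proof (rule borel_measurable_LIMSEQ_metric)
    show "(\<lambda>t. ip (h t) (Y i t)) \<in> borel_measurable (restrict_space lborel {0<..})" for i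
      by (rule Sec_meas[OF h Y_Sec])
    fix t :: real assume "t \<in> space (restrict_space lborel {0<..})"
    then have t: "t > 0" by (simp add: space_restrict_space)
    show "(\<lambda>i. ip (h t) (Y i t)) \<longlonglongrightarrow> ip (h t) (w t)"
      by (rule ip_cont_right[OF w_conv[OF t]])
  qed
qed

lemma w_unit: "is_unit E pm Sec w"
  unfolding is_unit_def using w_Sec w_ne w_mult by blast

lemma exp_unit: "\<exists>w. is_unit E pm Sec w \<and>
   (\<forall>t>0. hnorm ip (w t - (u t + b t)) \<le> sqrt (phi t * (exp (psi t) - 1 - psi t)))"
  using w_unit w_v unfolding v_def by blast

end



lemma exp_bound_aux: "0 \<le> (k::real) \<Longrightarrow> exp k - 1 - k \<le> k^2 * exp k"
proof -
  assume k: "0 \<le> k"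
  have "1 - k \<le> exp (- k)" using exp_ge_add_one_self[of "-k"] by simp
  then have "exp k * (1 - k) \<le> exp k * exp (-k)" by (intro mult_left_mono) auto
  then have a: "exp k - 1 \<le> k * exp k" by (simp add: exp_minus field_simps)
  have "exp k - 1 - k \<le> k * exp k - k" using a by simp
  also have "\<dots> = k * (exp k - 1)" by (simp add: algebra_simps)
  also have "\<dots> \<le> k * (k * exp k)" using a k by (intro mult_left_mono) auto
  finally show ?thesis by (simp add: power2_eq_square algebra_simps)
qed

lemma final_real_bound:
  fixes N P ph :: real
  assumes N: "N \<ge> 1" and P: "P \<ge> 0" and ph: "ph > 0"
  shows "N * sqrt (ph * (exp (P / N^2) - 1 - P / N^2)) \<le> sqrt (ph * exp P) * P / N"
proof -
  define k where "k = P / N^2"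
  have k0: "k \<ge> 0" unfolding k_def using P by simp
  have N2: "N^2 \<ge> 1" using N by (simp add: one_le_power)
  have "P * 1 \<le> P * N^2" by (rule mult_left_mono[OF N2 P])
  then have kP: "k \<le> P" unfolding k_def using N2 P by (simp add: divide_le_eq)
  have "k^2 * exp k \<le> k^2 * exp P" using kP by (intro mult_left_mono) auto
  then have "exp k - 1 - k \<le> k^2 * exp P" using exp_bound_aux[OF k0] by linarith
  then have "ph * (exp k - 1 - k) \<le> ph * (k^2 * exp P)"
    using ph by (intro mult_left_mono) auto
  then have "sqrt (ph * (exp k - 1 - k)) \<le> sqrt (ph * (k^2 * exp P))" by simp
  also have "\<dots> = k * sqrt (ph * exp P)" using k0 by (simp add: real_sqrt_mult)
  finally have "N * sqrt (ph * (exp k - 1 - k)) \<le> N * (k * sqrt (ph * exp P))" using N by simp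
  also have "N * (k * sqrt (ph * exp P)) = sqrt (ph * exp P) * P / N"
    unfolding k_def using N by (simp add: power2_eq_square field_simps)
  finally show ?thesis unfolding k_def .
qed

context psys begin

lemma root_sc: "is_root ip pm Sec u (\<lambda>s. sc c (b s))"
  unfolding is_root_def additive_unit_def
proof (intro conjI allI impI)
  show "(\<lambda>s. sc c (b s)) \<in> Sec"
  proof (rule Sec_max)
    show "\<And>t. t > 0 \<Longrightarrow> sc c (b t) \<in> E t" using E_sc b_E by blast
    fix g assume g: "g \<in> Sec"
    have "(\<lambda>t. c * ip (g t) (b t)) \<in> borel_measurable (restrict_space lborel {0<..})"
      using Sec_meas[OF g b_Sec] by (rule borel_measurable_times[OF borel_measurable_const])
    then show "(\<lambda>t. ip (g t) (sc c (b t))) \<in> borel_measurable (restrict_space lborel {0<..})"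
      by (simp add: ip_sc_right)
  qed
  fix s t :: real assume s: "s > 0" and t: "t > 0"
  show "sc c (b (s + t)) = pm s t (sc c (b s)) (u t) + pm s t (u s) (sc c (b t))"
    using s t by (simp add: b_add sc_add_right pm_sc_left pm_sc_right b_E u_E)
next
  fix t :: real assume t: "t > 0"
  show "ip (sc c (b t)) (u t) = 0" by (simp add: ip_sc_left b_ort t)
qed

lemma scaled_approx: "\<exists>w. is_unit E pm Sec w \<and>
   (\<forall>t>0. hnorm ip (w t - (u t + sc c (b t))) \<le>
      sqrt (phi t * (exp ((cmod c)^2 * psi t) - 1 - (cmod c)^2 * psi t)))"
proof -
  interpret B: psys ip sc E pm Sec u "\<lambda>s. sc c (b s)"
    using PS U root_sc by unfold_locales
  have psi_eq: "B.psi t = (cmod c)^2 * psi t" for t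
  proof -
    have "B.alpha t = (cmod c)^2 * alpha t"
    proof -
      have "B.alpha t = (hnorm ip (sc c (b t)))^2" unfolding B.alpha_def hnorm_sq by simp
      also have "\<dots> = (cmod c)^2 * (hnorm ip (b t))^2" by (simp add: hnorm_sc power_mult_distrib)
      finally show ?thesis unfolding alpha_def hnorm_sq .
    qed
    then show ?thesis unfolding B.psi_def psi_def B.phi_def phi_def by simp
  qed
  show ?thesis using B.exp_unit unfolding B.phi_def phi_def psi_eq by simp
qed

end

theorem mainTheorem3:
  fixes ip :: "'h::ab_group_add \<Rightarrow> 'h \<Rightarrow> complex" and sc :: "complex \<Rightarrow> 'h \<Rightarrow> 'h"
    and E :: "real \<Rightarrow> 'h set" and pm :: "real \<Rightarrow> real \<Rightarrow> 'h \<Rightarrow> 'h \<Rightarrow> 'h"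
    and Sec :: "(real \<Rightarrow> 'h) set" and u a :: "real \<Rightarrow> 'h"
  assumes "product_system ip sc E pm Sec"
    and "spatial E pm Sec"
    and "is_unit E pm Sec u"
    and "is_root ip pm Sec u a"
  shows "\<forall>t>0. a t \<in> type_I_part ip sc E pm Sec t"
proof (intro allI impI)
  fix t :: real assume t: "t > 0"
  interpret psys ip sc E pm Sec u a using assms(1,3,4) by unfold_locales
  show "a t \<in> type_I_part ip sc E pm Sec t"
    unfolding type_I_part_def
  proof (rule InterI)
    fix A assume "A \<in> {F t | F. product_subsystem ip sc E pm F \<and> (\<forall>v. is_unit E pm Sec v \<longrightarrow> (\<forall>s>0. v s \<in> F s))}"
    then obtain F where A: "A = F t" and FS: "product_subsystem ip sc E pm F"
      and FU: "\<And>v s. is_unit E pm Sec v \<Longrightarrow> s > 0 \<Longrightarrow> v s \<in> F s" by blast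
    have Fc: "closed_subspace ip sc (F t)" using FS t unfolding product_subsystem_def by blast
    then have Fl: "lin_subspace sc (F t)" and Fh: "hclosed ip (F t)" unfolding closed_subspace_def by auto
    have uF: "u t \<in> F t" using FU[OF assms(3) t] .
    define c where "c n = complex_of_real (1 / real (Suc n))" for n
    have "\<forall>n. \<exists>w. is_unit E pm Sec w \<and> (\<forall>s>0. hnorm ip (w s - (u s + sc (c n) (a s))) \<le>
        sqrt (phi s * (exp ((cmod (c n))^2 * psi s) - 1 - (cmod (c n))^2 * psi s)))"
      using scaled_approx by blast
    then obtain W where W: "\<And>n. is_unit E pm Sec (W n)"
      "\<And>n s. s > 0 \<Longrightarrow> hnorm ip (W n s - (u s + sc (c n) (a s))) \<le>
        sqrt (phi s * (exp ((cmod (c n))^2 * psi s) - 1 - (cmod (c n))^2 * psi s))"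
      by metis
    define x where "x n = sc (complex_of_real (real (Suc n))) (W n t - u t)" for n
    have xF: "x n \<in> F t" for n
    proof -
      have "W n t - u t \<in> F t" using lin_diff[OF Fl FU[OF W(1) t] uF] .
      then show ?thesis unfolding x_def using Fl unfolding lin_subspace_def by blast
    qed
    define K where "K = sqrt (phi t * exp (psi t)) * psi t"
    have xa: "hnorm ip (x n - a t) \<le> K / real (Suc n)" for n
    proof -
      define N where "N = real (Suc n)"
      have N1: "N \<ge> 1" unfolding N_def by simp
      have cc: "(cmod (c n))^2 * psi t = psi t / N^2" unfolding c_def N_def
        by (simp add: norm_divide power_divide del: of_nat_Suc)
      have Nc: "complex_of_real N * c n = 1" unfolding c_def N_def by (simp del: of_nat_Suc)
      have "x n - a t = sc (complex_of_real N) (W n t - (u t + sc (c n) (a t)))"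
      proof -
        have "sc (complex_of_real N) (W n t - (u t + sc (c n) (a t))) =
            sc (complex_of_real N) (W n t - u t) - sc (complex_of_real N) (sc (c n) (a t))"
          by (simp add: sc_diff_right[symmetric] algebra_simps)
        also have "sc (complex_of_real N) (sc (c n) (a t)) = a t" by (simp add: sc_sc Nc sc_one)
        finally show ?thesis unfolding x_def N_def by simp
      qed
      then have "hnorm ip (x n - a t) = N * hnorm ip (W n t - (u t + sc (c n) (a t)))"
        using N1 by (simp add: hnorm_sc)
      also have "\<dots> \<le> N * sqrt (phi t * (exp (psi t / N^2) - 1 - psi t / N^2))"
        using W(2)[OF t, of n] N1 unfolding cc by (intro mult_left_mono) auto
      also have "\<dots> \<le> sqrt (phi t * exp (psi t)) * psi t / N"
        by (rule final_real_bound[OF N1 psi_nonneg[OF t] phi_pos[OF t]])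
      finally show ?thesis unfolding K_def N_def by simp
    qed
    have "(\<lambda>n. hnorm ip (x n - a t)) \<longlonglongrightarrow> 0"
    proof (rule tendsto_sandwich[of "\<lambda>n. 0" _ _ "\<lambda>n. K / real (Suc n)"])
      show "\<forall>\<^sub>F n in sequentially. 0 \<le> hnorm ip (x n - a t)" by (simp add: hnorm_nonneg)
      show "\<forall>\<^sub>F n in sequentially. hnorm ip (x n - a t) \<le> K / real (Suc n)" using xa by simp
    qed (simp_all only: inv_Suc_lim tendsto_const)
    then have "a t \<in> F t" using Fh xF unfolding hclosed_def by blast
    then show "a t \<in> A" using A by simp
  qed
qed


end
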